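(* Let $\boldsymbol{G}\in\{0,1\}^{r\times m}$ with $r\le m$, let $p=\min\{\lfloor m/2\rfloor,r\}$, and let $q$ be a prime power with $q\ge q_{\min}=\binom{m}{p}$. Then in every execution of the MCD algorithm on $(\boldsymbol{G},q)$, at every step where an entry $h_{k,i}$ ($k\in[r]$, $i\in G_k$) is assigned, the set $\mathbb{F}_q\setminus Z_{k,i}^{L}$ is nonempty, i.e. there is always a value outside the veto set.
   Context: $G_k=\{i: g_{k,i}=1\}$. $\boldsymbol{H}_{[k]}$ is the first $k$ rows of $\boldsymbol{H}\in\mathbb{F}_q^{r\times m}$, $\boldsymbol{H}^{L}_{[k]}$ its columns in $L$. A set $S$ of column indices is a circuit of a matrix if its columns are linearly dependent but those of every proper subset are independent. Veto set: for $2\le k\le r$, $i\in L\subseteq[m]$, with all entries of $\boldsymbol{H}_{[k]}^{L}$ except $h_{k,i}$ fixed, and a circuit $C$ of $\boldsymbol{H}_{[k-1]}$ with $i\in C\subseteq L$, write column $i$ of $\boldsymbol{H}_{[k-1]}$ uniquely as $\sum_{j\in C\setminus\{i\}}f_j\cdot(\text{column }j)$ and set $c(C)=\sum_{j\in C\setminus\{i\}}f_jh_{k,j}$; $Z_{k,i}^{L}=\{c(L'\cup\{i\}):L'\subseteq L\setminus\{i\},\ L'\cup\{i\}\text{ a circuit of }\boldsymbol{H}_{[k-1]}\}$. MCD algorithm: set $h_{k,i}=0$ whenever $g_{k,i}=0$; set $h_{1,i}=1$ for $i\in G_1$; for $k=2,\dots,r$: let $R=G_k$; while $R\ne\emptyset$: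 pick any $i\in R$, set $R\leftarrow R\setminus\{i\}$, $L=[m]\setminus R$, compute $Z_{k,i}^{L}$ from the current entries, and assign to $h_{k,i}$ an arbitrary element of $\mathbb{F}_q\setminus Z_{k,i}^{L}$. *)

theory Defs
  imports Main
begin

text \<open>Matrices are functions nat => nat => 'a, with rows indexed 1..r and
columns indexed 1..m (1-based, as in the paper).\<close>

definition col_dep :: "(nat \<Rightarrow> nat \<Rightarrow> 'a::field) \<Rightarrow> nat \<Rightarrow> nat set \<Rightarrow> bool" where
  "col_dep H k S \<longleftrightarrow>
     (\<exists>a. (\<exists>j\<in>S. a j \<noteq> 0) \<and> (\<forall>l\<in>{1..k}. (\<Sum>j\<in>S. a j * H l j) = 0))"

definition is_circuit :: "(nat \<Rightarrow> nat \<Rightarrow> 'a::field) \<Rightarrow> nat \<Rightarrow> nat set \<Rightarrow> bool" where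
  "is_circuit H k S \<longleftrightarrow> finite S \<and> col_dep H k S \<and> (\<forall>T. T \<subset> S \<longrightarrow> \<not> col_dep H k T)"

definition circ_val :: "(nat \<Rightarrow> nat \<Rightarrow> 'a::field) \<Rightarrow> nat \<Rightarrow> nat \<Rightarrow> nat set \<Rightarrow> 'a" where
  "circ_val H k i C =
     (THE v. \<exists>f. (\<forall>l\<in>{1..k-1}. H l i = (\<Sum>j\<in>C-{i}. f j * H l j))
                 \<and> v = (\<Sum>j\<in>C-{i}. f j * H k j))"

definition veto :: "(nat \<Rightarrow> nat \<Rightarrow> 'a::field) \<Rightarrow> nat \<Rightarrow> nat \<Rightarrow> nat set \<Rightarrow> 'a set" where
  "veto H k i L =
     {circ_val H k i (L' \<union> {i}) | L'. L' \<subseteq> L - {i} \<and> is_circuit H (k-1) (L' \<union> {i})}"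

text \<open>Step t of row k in the MCD algorithm, where row k's support G_k is processed
  in the order given by the list \<sigma> k: i = \<sigma> k ! t, R = remaining (later) indices,
  L = [m] - R.\<close>
definition mcd_L :: "nat \<Rightarrow> (nat \<Rightarrow> nat list) \<Rightarrow> nat \<Rightarrow> nat \<Rightarrow> nat set" where
  "mcd_L m \<sigma> k t = {1..m} - set (drop (Suc t) (\<sigma> k))"

definition mcd_step_ok :: "(nat \<Rightarrow> nat \<Rightarrow> 'a::field) \<Rightarrow> nat \<Rightarrow> (nat \<Rightarrow> nat list) \<Rightarrow> nat \<Rightarrow> nat \<Rightarrow> bool" where
  "mcd_step_ok H m \<sigma> k t \<longleftrightarrow> H k (\<sigma> k ! t) \<notin> veto H k (\<sigma> k ! t) (mcd_L m \<sigma> k t)"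

end

theory Submission imports Defs "HOL-Combinatorics.Multiset_Permutations" begin

lemma chain_card:
  assumes N: "finite N" and A: "A \<subseteq> N"
  shows "card {xs\<in>permutations_of_set N. set (take (card A) xs) = A}
         = fact (card A) * fact (card N - card A)"
proof -
  have fA: "finite A" using N A finite_subset by blast
  let ?S = "{xs\<in>permutations_of_set N. set (take (card A) xs) = A}"
  let ?f = "\<lambda>(u,v). u @ v"
  have "bij_betw ?f (permutations_of_set A \<times> permutations_of_set (N - A)) ?S"
  proof (rule bij_betw_imageI)
    show "inj_on ?f (permutations_of_set A \<times> permutations_of_set (N - A))"
    proof (rule inj_onI, clarify)
      fix u v u' v'
      assume "u \<in> permutations_of_set A" "v \<in> permutations_of_set (N - A)"
        "u' \<in> permutations_of_set A" "v' \<in> permutations_of_set (N - A)" "u @ v = u' @ v'"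
      moreover have "length u = length u'" using calculation
        by (simp add: length_finite_permutations_of_set)
      ultimately show "u = u' \<and> v = v'" by simp
    qed
    show "?f ` (permutations_of_set A \<times> permutations_of_set (N - A)) = ?S"
    proof
      show "?f ` (permutations_of_set A \<times> permutations_of_set (N - A)) \<subseteq> ?S"
      proof (rule image_subsetI)
        fix p assume p: "p \<in> permutations_of_set A \<times> permutations_of_set (N - A)"
        obtain u v where uv: "p = (u, v)" by fastforce
        have u: "u \<in> permutations_of_set A" and v: "v \<in> permutations_of_set (N - A)" using p uv by auto
        have lu: "length u = card A" using u by (simp add: length_finite_permutations_of_set)
        have "u @ v \<in> permutations_of_set N"
          using u v A unfolding permutations_of_set_def by auto
        moreover have "set (take (card A) (u @ v)) = A" using lu u
          by (simp add: permutations_of_set_def)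
        ultimately show "?f p \<in> ?S" using uv by simp
      qed
      show "?S \<subseteq> ?f ` (permutations_of_set A \<times> permutations_of_set (N - A))"
      proof
        fix xs assume xs: "xs \<in> ?S"
        hence d: "distinct xs" "set xs = N" and t: "set (take (card A) xs) = A"
          by (auto simp: permutations_of_set_def)
        have "set (drop (card A) xs) = N - A"
        proof -
          have "distinct (take (card A) xs @ drop (card A) xs)" using d by simp
          hence "set (take (card A) xs) \<inter> set (drop (card A) xs) = {}"
            by (simp only: distinct_append)
          moreover have "set (take (card A) xs) \<union> set (drop (card A) xs) = N"
            using d by (metis append_take_drop_id set_append)
          ultimately show ?thesis using t by blast
        qed
        moreover have "distinct (take (card A) xs)" "distinct (drop (card A) xs)" using d by auto
        ultimately have "(take (card A) xs, drop (card A) xs)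
             \<in> permutations_of_set A \<times> permutations_of_set (N - A)"
          using t by (auto simp: permutations_of_set_def)
        thus "xs \<in> ?f ` (permutations_of_set A \<times> permutations_of_set (N - A))"
          by (metis (no_types, lifting) append_take_drop_id case_prod_conv image_eqI)
      qed
    qed
  qed
  hence "card ?S = card (permutations_of_set A \<times> permutations_of_set (N - A))"
    by (simp add: bij_betw_same_card)
  also have "\<dots> = fact (card A) * fact (card N - card A)"
    using fA N A by (simp add: card_cartesian_product card_Diff_subset)
  finally show ?thesis .
qed

lemma lym:
  assumes N: "finite N" and F: "F \<subseteq> Pow N"
    and anti: "\<And>A B. A \<in> F \<Longrightarrow> B \<in> F \<Longrightarrow> A \<subseteq> B \<Longrightarrow> A = B"
  shows "(\<Sum>A\<in>F. fact (card A) * fact (card N - card A)) \<le> (fact (card N) :: nat)"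
proof -
  define S where "S A = {xs\<in>permutations_of_set N. set (take (card A) xs) = A}" for A
  have fF: "finite F" using F N by (meson finite_Pow_iff finite_subset)
  have "(\<Sum>A\<in>F. fact (card A) * fact (card N - card A)) = (\<Sum>A\<in>F. card (S A))"
    using F N by (intro sum.cong) (auto simp: S_def chain_card)
  also have "\<dots> = card (\<Union>A\<in>F. S A)"
  proof (rule card_UN_disjoint[symmetric])
    show "finite F" by fact
    show "\<forall>i\<in>F. finite (S i)" by (simp add: S_def)
    show "\<forall>i\<in>F. \<forall>j\<in>F. i \<noteq> j \<longrightarrow> S i \<inter> S j = {}"
    proof (intro ballI impI)
      fix A B assume AB: "A \<in> F" "B \<in> F" "A \<noteq> B"
      show "S A \<inter> S B = {}"
      proof (rule ccontr)
        assume "S A \<inter> S B \<noteq> {}"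
        then obtain xs where "set (take (card A) xs) = A" "set (take (card B) xs) = B"
          by (auto simp: S_def)
        hence "A \<subseteq> B \<or> B \<subseteq> A"
          by (metis nle_le set_take_subset_set_take)
        thus False using anti AB by blast
      qed
    qed
  qed
  also have "\<dots> \<le> card (permutations_of_set N)"
    by (rule card_mono) (auto simp: S_def)
  finally show ?thesis using N by simp
qed

lemma lym_bound:
  assumes N: "finite N" and F: "F \<subseteq> Pow N"
    and anti: "\<And>A B. A \<in> F \<Longrightarrow> B \<in> F \<Longrightarrow> A \<subseteq> B \<Longrightarrow> A = B"
    and c: "\<And>A. A \<in> F \<Longrightarrow> card N choose card A \<le> c"
  shows "card F \<le> c"
proof -
  have fF: "finite F" using F N by (meson finite_Pow_iff finite_subset)
  have "card F * fact (card N) = (\<Sum>A\<in>F. fact (card N) :: nat)" by simp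
  also have "\<dots> \<le> (\<Sum>A\<in>F. fact (card A) * fact (card N - card A) * c)"
  proof (rule sum_mono)
    fix A assume A: "A \<in> F"
    have "card A \<le> card N" using A F N by (auto intro: card_mono)
    hence "fact (card N) = fact (card A) * fact (card N - card A) * (card N choose card A)"
      using binomial_fact_lemma[of "card A" "card N"] by simp
    also have "\<dots> \<le> fact (card A) * fact (card N - card A) * c"
      using c[OF A] by simp
    finally show "fact (card N) \<le> fact (card A) * fact (card N - card A) * c" .
  qed
  also have "\<dots> = c * (\<Sum>A\<in>F. fact (card A) * fact (card N - card A))"
    by (simp add: sum_distrib_left mult.commute)
  also have "\<dots> \<le> c * fact (card N)"
    using lym[OF N F anti] by simp
  finally have "card F * fact (card N) \<le> c * fact (card N)" .
  thus ?thesis by simp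
qed

lemma dep_many:
  fixes H :: "nat \<Rightarrow> nat \<Rightarrow> 'a::field"
  assumes "finite S" "card S > n"
  shows "col_dep H n S"
  using assms
proof (induction n arbitrary: H S)
  case 0
  then obtain j where j: "j \<in> S" by fastforce
  show ?case unfolding col_dep_def
    by (rule exI[of _ "\<lambda>_. 1"]) (use j in auto)
next
  case (Suc n)
  show ?case
  proof (cases "\<forall>j\<in>S. H (Suc n) j = 0")
    case True
    from Suc.IH[of S H] Suc.prems obtain a where a: "\<exists>j\<in>S. a j \<noteq> 0"
      "\<forall>l\<in>{1..n}. (\<Sum>j\<in>S. a j * H l j) = 0" unfolding col_dep_def by auto
    show ?thesis unfolding col_dep_def
    proof (intro exI conjI ballI)
      show "\<exists>j\<in>S. a j \<noteq> 0" by fact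
      fix l assume "l \<in> {1..Suc n}"
      then consider "l \<in> {1..n}" | "l = Suc n" by fastforce
      thus "(\<Sum>j\<in>S. a j * H l j) = 0" using a True by cases auto
    qed
  next
    case False
    then obtain j0 where j0: "j0 \<in> S" and c: "H (Suc n) j0 \<noteq> 0" by blast
    define c where "c = H (Suc n) j0"
    define S' where "S' = S - {j0}"
    define H' where "H' l j = H l j - H l j0 * H (Suc n) j / c" for l j
    have fS': "finite S'" "card S' > n" using Suc.prems j0 by (auto simp: S'_def)
    from Suc.IH[OF fS'] obtain a where a: "\<exists>j\<in>S'. a j \<noteq> 0"
      "\<forall>l\<in>{1..n}. (\<Sum>j\<in>S'. a j * H' l j) = 0" unfolding col_dep_def by blast
    define X where "X = (\<Sum>j\<in>S'. a j * H (Suc n) j)"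
    define b where "b = a(j0 := - X / c)"
    have Sdec: "S = insert j0 S'" "j0 \<notin> S'" using j0 by (auto simp: S'_def)
    have sumS: "(\<Sum>j\<in>S. b j * H l j) = - X / c * H l j0 + (\<Sum>j\<in>S'. a j * H l j)" for l
    proof -
      have "(\<Sum>j\<in>S. b j * H l j) = b j0 * H l j0 + (\<Sum>j\<in>S'. b j * H l j)"
        using Sdec fS' by simp
      also have "(\<Sum>j\<in>S'. b j * H l j) = (\<Sum>j\<in>S'. a j * H l j)"
        using Sdec by (intro sum.cong) (auto simp: b_def)
      finally show ?thesis by (simp add: b_def)
    qed
    show ?thesis unfolding col_dep_def
    proof (intro exI conjI ballI)
      show "\<exists>j\<in>S. b j \<noteq> 0" using a(1) Sdec by (auto simp: b_def)
      fix l assume "l \<in> {1..Suc n}"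
      then consider "l \<in> {1..n}" | "l = Suc n" by fastforce
      thus "(\<Sum>j\<in>S. b j * H l j) = 0"
      proof cases
        case 1
        have "(\<Sum>j\<in>S'. a j * H l j) = (\<Sum>j\<in>S'. a j * H' l j + H l j0 / c * (a j * H (Suc n) j))"
          by (intro sum.cong) (auto simp: H'_def algebra_simps)
        also have "\<dots> = H l j0 / c * X"
          using a(2) 1 by (simp add: sum.distrib X_def flip: sum_divide_distrib sum_distrib_left)
        finally show ?thesis using sumS by simp
      next
        case 2
        show ?thesis using sumS 2 c by (simp add: X_def c_def)
      qed
    qed
  qed
qed

lemma circuit_card:
  fixes H :: "nat \<Rightarrow> nat \<Rightarrow> 'a::field"
  assumes "is_circuit H (k - 1) C" "k \<ge> 1"
  shows "card C \<le> k"
proof (rule ccontr)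
  assume "\<not> card C \<le> k"
  hence ck: "card C > k" by simp
  then obtain x where x: "x \<in> C" by fastforce
  have fC: "finite C" using assms by (simp add: is_circuit_def)
  have "C - {x} \<subset> C" using x by blast
  moreover have "col_dep H (k - 1) (C - {x})"
    using ck x fC assms(2) by (intro dep_many) auto
  ultimately show False using assms(1) by (auto simp: is_circuit_def)
qed

lemma binom_arith:
  fixes m r k :: nat
  assumes "2 \<le> k" "k \<le> r" "r \<le> m"
  shows "(m - 1) choose (min ((m - 1) div 2) (k - 1)) < m choose (min (m div 2) r)"
proof -
  define s where "s = min ((m - 1) div 2) (k - 1)"
  have m2: "m \<ge> 2" using assms by simp
  have s1: "Suc s \<le> m - 1" using m2 unfolding s_def by linarith
  have pas: "m choose (Suc s) = ((m - 1) choose s) + ((m - 1) choose (Suc s))"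
    using m2 by (metis Suc_diff_1 binomial_Suc_Suc less_le_trans pos2)
  have "(m - 1) choose (Suc s) > 0" using s1 by simp
  hence lt: "(m - 1) choose s < m choose (Suc s)" using pas by simp
  have "m choose (Suc s) \<le> m choose (min (m div 2) r)"
  proof (cases "Suc s \<le> m div 2")
    case True
    hence "Suc s \<le> min (m div 2) r" using assms unfolding s_def by linarith
    thus ?thesis by (intro binomial_mono) linarith+
  next
    case False
    hence "min (m div 2) r = m div 2" using assms unfolding s_def by linarith
    thus ?thesis using binomial_maximum by simp
  qed
  with lt show ?thesis unfolding s_def by simp
qed

theorem proposition6:
  fixes g :: "nat \<Rightarrow> nat \<Rightarrow> nat"
    and r m :: nat
    and H :: "nat \<Rightarrow> nat \<Rightarrow> 'a::{field,finite}"
    and \<sigma> :: "nat \<Rightarrow> nat list"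
    and k t :: nat
  assumes G01: "\<forall>k'\<in>{1..r}. \<forall>i\<in>{1..m}. g k' i \<in> {0, 1}"
    and rm: "r \<le> m"
    and q: "card (UNIV :: 'a set) \<ge> m choose (min (m div 2) r)"
    and zeros: "\<forall>k'\<in>{1..r}. \<forall>i\<in>{1..m}. g k' i = 0 \<longrightarrow> H k' i = 0"
    and row1: "\<forall>i\<in>{1..m}. g 1 i = 1 \<longrightarrow> H 1 i = 1"
    and order: "\<forall>k'\<in>{2..r}. distinct (\<sigma> k') \<and> set (\<sigma> k') = {i\<in>{1..m}. g k' i = 1}"
    and prev_rows: "\<forall>k'\<in>{2..<k}. \<forall>t'<length (\<sigma> k'). mcd_step_ok H m \<sigma> k' t'"
    and prev_steps: "\<forall>t'<t. mcd_step_ok H m \<sigma> k t'"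
    and k: "k \<in> {2..r}"
    and t: "t < length (\<sigma> k)"
  shows "UNIV - veto H k (\<sigma> k ! t) (mcd_L m \<sigma> k t) \<noteq> {}"
proof -
  define i where "i = \<sigma> k ! t"
  define L where "L = mcd_L m \<sigma> k t"
  have iin: "i \<in> {1..m}" using order k t unfolding i_def
    by (metis (no_types, lifting) mem_Collect_eq nth_mem)
  have LS: "L \<subseteq> {1..m}" by (auto simp: L_def mcd_L_def)
  define Fam where "Fam = {L'. L' \<subseteq> L - {i} \<and> is_circuit H (k - 1) (L' \<union> {i})}"
  define N where "N = {1..m} - {i}"
  have veq: "veto H k i L = (\<lambda>L'. circ_val H k i (L' \<union> {i})) ` Fam"
    unfolding veto_def Fam_def by blast
  have fN: "finite N" by (simp add: N_def)
  have cN: "card N = m - 1" using iin by (simp add: N_def)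
  have FP: "Fam \<subseteq> Pow N" using LS by (auto simp: Fam_def N_def)
  have anti: "A = B" if "A \<in> Fam" "B \<in> Fam" "A \<subseteq> B" for A B
  proof (rule ccontr)
    assume "A \<noteq> B"
    hence "A \<union> {i} \<subset> B \<union> {i}" using that by (auto simp: Fam_def)
    moreover have "col_dep H (k - 1) (A \<union> {i})" using that(1) by (simp add: Fam_def is_circuit_def)
    ultimately show False using that(2) by (auto simp: Fam_def is_circuit_def)
  qed
  define s where "s = min ((m - 1) div 2) (k - 1)"
  have cb: "card N choose card A \<le> (m - 1) choose s" if A: "A \<in> Fam" for A
  proof -
    have "card (A \<union> {i}) \<le> k" using A k by (intro circuit_card[of H]) (auto simp: Fam_def)
    moreover have "A \<subseteq> N" using A FP by blast
    hence "finite A" using fN by (rule finite_subset)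
    moreover have "i \<notin> A" using A by (auto simp: Fam_def)
    ultimately have ca: "card A \<le> k - 1" by simp
    show ?thesis
    proof (cases "k - 1 \<le> (m - 1) div 2")
      case True
      hence "card A \<le> s" "2 * s \<le> m - 1" using ca unfolding s_def by linarith+
      thus ?thesis using cN by (simp add: binomial_mono)
    next
      case False
      hence "s = (m - 1) div 2" unfolding s_def by simp
      thus ?thesis using cN binomial_maximum by simp
    qed
  qed
  have "card Fam \<le> (m - 1) choose s" by (rule lym_bound[OF fN FP anti cb])
  hence "card (veto H k i L) \<le> (m - 1) choose s" using veq
  proof -
    have "finite Fam" using FP fN by (meson finite_Pow_iff finite_subset)
    thus ?thesis using veq \<open>card Fam \<le> (m - 1) choose s\<close>
      by (metis card_image_le dual_order.trans)
  qed
  also have "\<dots> < m choose (min (m div 2) r)" unfolding s_def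
    using k rm by (intro binom_arith) auto
  also have "\<dots> \<le> card (UNIV :: 'a set)" by (rule q)
  finally have "card (veto H k i L) < card (UNIV :: 'a set)" .
  hence "veto H k i L \<noteq> UNIV" by auto
  thus ?thesis unfolding i_def L_def by blast
qed

end
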